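(* For every $d\ge2$, every $A\in\mathcal C^{d-1}$ and every $p\in[1,\infty)$, $$\max_{C\in\mathcal C^d_A}\big\|r_C-\tfrac12\big\|_{A,p}=\tfrac12(p+1)^{-1/p},$$ i.e. $\|r_C-\frac12\|_{A,p}\le \frac12(p+1)^{-1/p}$ for all $C\in\mathcal C^d_A$, with equality for some $C\in\mathcal C^d_A$ (e.g. any completely dependent copula $C_h\in\mathcal C^d_A$, whose Markov kernel is $\mathbf 1_F(h(\mathbf x))$ for a measurable $h$ with $\mu_A\circ h^{-1}=\lambda$).
   Context: $\mathbb I=[0,1]$, $\lambda$ Lebesgue measure. A $d$-copula $C\in\mathcal C^d$ is the distribution function on $\mathbb I^d$ of a probability measure $\mu_C$ with uniform univariate marginals; points are $(\mathbf x,y)$, $\mathbf x\in\mathbb I^{d-1}$. $C_{1:(d-1)}$ is the marginal copula of the first $d-1$ coordinates. For $A\in\mathcal C^{d-1}$, $\mathcal C^d_A=\{C\in\mathcal C^d: C_{1:(d-1)}=A\}$; for $d=2$, $\mu_A=\lambda$ and $\mathcal C^2_A=\mathcal C^2$. $K_C$ is the Markov kernel of $C$ w.r.t. the first $d-1$ coordinates: $\mu_C(B\times F)=\int_B K_C(\mathbf x,F)\,\mathrm d\mu_{C_{1:(d-1)}}(\mathbf x)$. Regression function $r_C(\mathbf x)=\int y\,K_C(\mathbf x,\mathrm dy)$. $\|f\|_{A,p}=(\int_{\mathbb I^{d-1}}|f|^p\,\mathrm d\mu_A)^{1/p}$. *)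

theory Defs
  imports "HOL-Probability.Probability"
begin

text \<open>Points of the unit cube in dimension m are represented as functions
  nat \<Rightarrow> real on the index set {..<m} (product measure space).  A m-copula is
  represented by its probability measure (the distribution function and the
  measure determine each other): a probability measure on the m-fold product
  of the real line whose univariate marginals are uniform on [0,1] (this forces
  the support to lie in the unit cube).\<close>

definition cube_ms :: "nat \<Rightarrow> (nat \<Rightarrow> real) measure" where
  "cube_ms m = PiM {..<m} (\<lambda>_. lborel)"

definition is_copula :: "nat \<Rightarrow> (nat \<Rightarrow> real) measure \<Rightarrow> bool" where
  "is_copula m \<mu> \<longleftrightarrow> prob_space \<mu> \<and> sets \<mu> = sets (cube_ms m) \<and>
     (\<forall>i<m. distr \<mu> lborel (\<lambda>z. z i) = uniform_measure lborel {0..1})"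

definition marginal_copula :: "nat \<Rightarrow> (nat \<Rightarrow> real) measure \<Rightarrow> (nat \<Rightarrow> real) measure" where
  "marginal_copula d \<mu> = distr \<mu> (cube_ms (d - 1)) (\<lambda>z. restrict z {..<d - 1})"

text \<open>K is a Markov kernel of the d-copula \<mu> w.r.t. the first d-1 coordinates;
  the point z is split as (x,y) with x = z restricted to {..<d-1}, y = z (d-1).\<close>
definition markov_kernel ::
  "nat \<Rightarrow> (nat \<Rightarrow> real) measure \<Rightarrow> ((nat \<Rightarrow> real) \<Rightarrow> real measure) \<Rightarrow> bool" where
  "markov_kernel d \<mu> K \<longleftrightarrow>
     K \<in> measurable (cube_ms (d - 1)) (prob_algebra lborel) \<and>
     (\<forall>B\<in>sets (cube_ms (d - 1)). \<forall>F\<in>sets lborel.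
        emeasure \<mu> {z\<in>space \<mu>. restrict z {..<d - 1} \<in> B \<and> z (d - 1) \<in> F}
          = (\<integral>\<^sup>+x\<in>B. emeasure (K x) F \<partial>(marginal_copula d \<mu>)))"

definition regression :: "((nat \<Rightarrow> real) \<Rightarrow> real measure) \<Rightarrow> (nat \<Rightarrow> real) \<Rightarrow> real" where
  "regression K x = (\<integral>y. y \<partial>(K x))"

definition normAp :: "(nat \<Rightarrow> real) measure \<Rightarrow> real \<Rightarrow> ((nat \<Rightarrow> real) \<Rightarrow> real) \<Rightarrow> real" where
  "normAp A p f = (\<integral>x. \<bar>f x\<bar> powr p \<partial>A) powr (1 / p)"

end

theory Submission
  imports Defs
begin

lemma half_right:
  fixes p :: real assumes p: "0 < p"
  shows "((\<lambda>y. \<bar>y - 1/2\<bar> powr p) has_integral ((1/2) powr (p+1) / (p+1))) {1/2..1}"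
proof -
  define F where "F = (\<lambda>y::real. (y - 1/2) powr (p+1) / (p+1))"
  have "((\<lambda>y. \<bar>y - 1/2\<bar> powr p) has_integral (F 1 - F (1/2))) {1/2..1}"
  proof (rule fundamental_theorem_of_calculus_interior)
    show "continuous_on {1/2..1::real} F"
      unfolding F_def using p by (intro continuous_intros continuous_on_powr') auto
    fix x :: real assume x: "x \<in> {1/2<..<1}"
    have "(F has_real_derivative \<bar>x - 1/2\<bar> powr p) (at x)"
      unfolding F_def using x p by (auto intro!: derivative_eq_intros)
    then show "(F has_vector_derivative \<bar>x - 1/2\<bar> powr p) (at x)"
      by (simp add: has_real_derivative_iff_has_vector_derivative)
  qed simp
  then show ?thesis by (simp add: F_def)
qed

lemma half_left:
  fixes p :: real assumes p: "0 < p"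
  shows "((\<lambda>y. \<bar>y - 1/2\<bar> powr p) has_integral ((1/2) powr (p+1) / (p+1))) {0..1/2}"
proof -
  define F where "F = (\<lambda>y::real. 0 - (1/2 - y) powr (p+1) / (p+1))"
  have "((\<lambda>y. \<bar>y - 1/2\<bar> powr p) has_integral (F (1/2) - F 0)) {0..1/2}"
  proof (rule fundamental_theorem_of_calculus_interior)
    show "continuous_on {0..1/2::real} F"
      unfolding F_def using p by (intro continuous_intros continuous_on_powr') auto
    fix x :: real assume x: "x \<in> {0<..<1/2}"
    have "(F has_real_derivative \<bar>x - 1/2\<bar> powr p) (at x)"
      unfolding F_def using x p by (auto intro!: derivative_eq_intros)
    then show "(F has_vector_derivative \<bar>x - 1/2\<bar> powr p) (at x)"
      by (simp add: has_real_derivative_iff_has_vector_derivative)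
  qed simp
  then show ?thesis by (simp add: F_def)
qed

lemma full_int:
  fixes p :: real assumes p: "0 < p"
  shows "((\<lambda>y. \<bar>y - 1/2\<bar> powr p) has_integral ((1/2) powr p / (p+1))) {0..1}"
proof -
  have "((\<lambda>y. \<bar>y - 1/2\<bar> powr p) has_integral ((1/2) powr (p+1) / (p+1) + (1/2) powr (p+1) / (p+1))) {0..1}"
    by (rule has_integral_combine[OF _ _ half_left[OF p] half_right[OF p]]) auto
  moreover have "(1/2::real) powr (p+1) = (1/2) powr p / 2"
    by (simp add: powr_add)
  moreover have "(1/2::real) powr p / 2 / (p+1) + (1/2) powr p / 2 / (p+1) = (1/2) powr p / (p+1)"
  proof -
    have "\<And>a::real. a/2/(p+1) + a/2/(p+1) = a/(p+1)" by (simp only: add_divide_distrib[symmetric]) simp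
    then show ?thesis by blast
  qed
  ultimately show ?thesis by simp
qed

lemma unif_nn:
  fixes p :: real assumes p: "0 < p"
  shows "(\<integral>\<^sup>+y. ennreal (\<bar>y - 1/2\<bar> powr p) \<partial>uniform_measure lborel {0..1}) = ennreal ((1/2) powr p / (p+1))"
proof -
  have "(\<integral>\<^sup>+y. ennreal (\<bar>y - 1/2\<bar> powr p) \<partial>uniform_measure lborel {0..1})
     = (\<integral>\<^sup>+y. ennreal (\<bar>y - 1/2\<bar> powr p) * indicator {0..1} y \<partial>lborel) / emeasure lborel {0..1::real}"
    by (rule nn_integral_uniform_measure) auto
  also have "\<dots> = ennreal ((1/2) powr p / (p+1))"
    using nn_integral_has_integral_lebesgue'[OF _ full_int[OF p]] by (simp add: divide_ennreal_def)
  finally show ?thesis .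
qed

lemma unif_int:
  fixes p :: real assumes p: "0 < p"
  shows "integrable (uniform_measure lborel {0..1}) (\<lambda>y. \<bar>y - 1/2::real\<bar> powr p)"
    "(\<integral>y. \<bar>y - 1/2\<bar> powr p \<partial>uniform_measure lborel {0..1::real}) = (1/2) powr p / (p+1)"
proof -
  show i: "integrable (uniform_measure lborel {0..1}) (\<lambda>y. \<bar>y - 1/2::real\<bar> powr p)"
    using unif_nn[OF p] by (intro integrableI_nonneg) auto
  have "(\<integral>\<^sup>+y. ennreal (\<bar>y - 1/2\<bar> powr p) \<partial>uniform_measure lborel {0..1}) = ennreal (\<integral>y. \<bar>y - 1/2\<bar> powr p \<partial>uniform_measure lborel {0..1::real})"
    by (rule nn_integral_eq_integral[OF i]) auto
  moreover have "0 \<le> (\<integral>y. \<bar>y - 1/2\<bar> powr p \<partial>uniform_measure lborel {0..1::real})"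
    by (rule integral_nonneg_AE) auto
  ultimately show "(\<integral>y. \<bar>y - 1/2\<bar> powr p \<partial>uniform_measure lborel {0..1::real}) = (1/2) powr p / (p+1)"
    using unif_nn[OF p] p by (metis ennreal_inj divide_nonneg_nonneg powr_ge_zero less_eq_real_def add_pos_pos zero_less_one)
qed

lemma powr_conv_nonneg:
  fixes a b t p :: real
  assumes p: "1 \<le> p" and a: "0 \<le> a" and b: "0 \<le> b" and t: "0 < t" "t < 1"
  shows "((1 - t) * a + t * b) powr p \<le> (1 - t) * a powr p + t * b powr p"
proof -
  have tp: "s powr p \<le> s" if "0 \<le> s" "s \<le> 1" for s :: real
    using powr_mono'[OF p that] that by simp
  consider "a = 0" | "b = 0" | "0 < a" "0 < b" using a b by linarith
  then show ?thesis
  proof cases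
    case 1
    have "(t * b) powr p = t powr p * b powr p" by (simp add: powr_mult)
    also have "\<dots> \<le> t * b powr p" using tp[of t] t by (intro mult_right_mono) auto
    finally show ?thesis using 1 p by simp
  next
    case 2
    have "((1 - t) * a) powr p = (1 - t) powr p * a powr p" by (simp add: powr_mult)
    also have "\<dots> \<le> (1 - t) * a powr p" using tp[of "1 - t"] t by (intro mult_right_mono) auto
    finally show ?thesis using 2 p by simp
  next
    case 3
    have "convex_on {0<..} (\<lambda>x::real. x powr p)" by (rule powr_convex[OF p])
    from convex_onD[OF this, of t a b] 3 t show ?thesis by (simp add: algebra_simps)
  qed
qed

lemma convex_abs_powr:
  fixes c p :: real assumes p: "1 \<le> p"
  shows "convex_on UNIV (\<lambda>y. \<bar>y - c\<bar> powr p)"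
proof (rule convex_onI)
  fix t x y :: real assume t: "0 < t" "t < 1"
  have "\<bar>(1 - t) *\<^sub>R x + t *\<^sub>R y - c\<bar> = \<bar>(1 - t) * (x - c) + t * (y - c)\<bar>"
    by (simp add: algebra_simps)
  also have "\<dots> \<le> (1 - t) * \<bar>x - c\<bar> + t * \<bar>y - c\<bar>"
  proof -
    have "\<bar>(1 - t) * (x - c) + t * (y - c)\<bar> \<le> \<bar>(1 - t) * (x - c)\<bar> + \<bar>t * (y - c)\<bar>"
      by (rule abs_triangle_ineq)
    also have "\<dots> = (1 - t) * \<bar>x - c\<bar> + t * \<bar>y - c\<bar>"
      using t by (simp add: abs_mult)
    finally show ?thesis .
  qed
  finally have "\<bar>(1 - t) *\<^sub>R x + t *\<^sub>R y - c\<bar> powr p \<le> ((1 - t) * \<bar>x - c\<bar> + t * \<bar>y - c\<bar>) powr p"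
    using p by (intro powr_mono2) auto
  also have "\<dots> \<le> (1 - t) * \<bar>x - c\<bar> powr p + t * \<bar>y - c\<bar> powr p"
    by (rule powr_conv_nonneg[OF p _ _ t]) auto
  finally show "\<bar>(1 - t) *\<^sub>R x + t *\<^sub>R y - c\<bar> powr p \<le> (1 - t) * \<bar>x - c\<bar> powr p + t * \<bar>y - c\<bar> powr p" .
qed simp

lemma const_eq:
  fixes p :: real assumes p: "1 \<le> p"
  shows "((1/2) powr p / (p+1)) powr (1/p) = 1/2 * (p + 1) powr (- 1 / p)"
proof -
  have "((1/2::real) powr p / (p+1)) powr (1/p) = ((1/2) powr p) powr (1/p) / (p+1) powr (1/p)"
    by (rule powr_divide)
  also have "((1/2::real) powr p) powr (1/p) = 1/2"
    using p by (simp add: powr_powr)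
  also have "(p + 1) powr (- 1 / p) = 1 / (p+1) powr (1/p)"
    by (simp add: powr_minus_divide[symmetric])
  ultimately show ?thesis by simp
qed

lemma space_cube: "space (cube_ms m) = PiE {..<m} (\<lambda>_. UNIV)"
  by (simp add: cube_ms_def space_PiM)

lemma coord_meas: "i < m \<Longrightarrow> (\<lambda>x. x i) \<in> measurable (cube_ms m) lborel"
  unfolding cube_ms_def by (rule measurable_component_singleton) auto

lemma upper:
  fixes p :: real
  assumes A: "is_copula n A" and p: "1 \<le> p"
    and C: "is_copula (Suc n) C" and mC: "marginal_copula (Suc n) C = A"
    and mk: "markov_kernel (Suc n) C K"
  shows "normAp A p (\<lambda>x. regression K x - 1/2) \<le> 1/2 * (p+1) powr (-1/p)"
proof -
  have pA: "prob_space A" and sA: "sets A = sets (cube_ms n)" using A by (auto simp: is_copula_def)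
  have pC: "prob_space C" and sC: "sets C = sets (cube_ms (Suc n))"
    and uC: "distr C lborel (\<lambda>z. z n) = uniform_measure lborel {0..1}" using C by (auto simp: is_copula_def)
  have Kmeas0: "K \<in> measurable (cube_ms n) (prob_algebra lborel)"
    and kid: "\<And>B F. B \<in> sets (cube_ms n) \<Longrightarrow> F \<in> sets lborel \<Longrightarrow>
        emeasure C {z\<in>space C. restrict z {..<n} \<in> B \<and> z n \<in> F}
          = (\<integral>\<^sup>+x\<in>B. emeasure (K x) F \<partial>A)"
    using mk mC by (auto simp: markov_kernel_def)
  have Kmeas: "K \<in> measurable A (prob_algebra lborel)"
    by (subst measurable_cong_sets[OF sA refl]) (rule Kmeas0)
  have Ksub: "K \<in> measurable A (subprob_algebra lborel)"
    by (rule measurable_prob_algebraD[OF Kmeas])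
  have Kx: "prob_space (K x)" "sets (K x) = sets lborel" if "x \<in> space A" for x
    using measurable_space[OF Kmeas that] by (auto simp: space_prob_algebra)
  have spA: "space A \<noteq> {}" using pA prob_space.not_empty by blast
  have spAeq: "space A = space (cube_ms n)" using sA by (rule sets_eq_imp_space_eq)
  have spCeq: "space C = space (cube_ms (Suc n))" using sC by (rule sets_eq_imp_space_eq)
  have coord: "(\<lambda>z. z n) \<in> measurable C lborel"
    by (subst measurable_cong_sets[OF sC refl]) (rule coord_meas, simp)
  have bindeq: "A \<bind> K = uniform_measure lborel {0..1}"
  proof (rule measure_eqI)
    have sb: "sets (A \<bind> K) = sets lborel" by (rule sets_bind[OF Kx(2) spA])
    then show "sets (A \<bind> K) = sets (uniform_measure lborel {0..1})" by simp
    fix F assume "F \<in> sets (A \<bind> K)"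
    then have F: "F \<in> sets lborel" using sb by simp
    have "emeasure (A \<bind> K) F = (\<integral>\<^sup>+x. emeasure (K x) F \<partial>A)"
      by (rule emeasure_bind[OF spA Ksub F])
    also have "\<dots> = (\<integral>\<^sup>+x\<in>space (cube_ms n). emeasure (K x) F \<partial>A)"
      by (rule nn_integral_cong) (simp add: spAeq)
    also have "\<dots> = emeasure C {z\<in>space C. restrict z {..<n} \<in> space (cube_ms n) \<and> z n \<in> F}"
      by (rule kid[symmetric]) (use F in auto)
    also have "{z\<in>space C. restrict z {..<n} \<in> space (cube_ms n) \<and> z n \<in> F} = (\<lambda>z. z n) -` F \<inter> space C"
      by (auto simp: space_cube)
    also have "emeasure C \<dots> = emeasure (distr C lborel (\<lambda>z. z n)) F"
      by (rule emeasure_distr[OF coord F, symmetric])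
    finally show "emeasure (A \<bind> K) F = emeasure (uniform_measure lborel {0..1}) F"
      using uC by simp
  qed
  have AEK: "AE x in A. emeasure (K x) (-{0..1}) = 0"
  proof -
    have "(\<integral>\<^sup>+x. emeasure (K x) (-{0..1}) \<partial>A) = emeasure (A \<bind> K) (-{0..1})"
      by (rule emeasure_bind[OF spA Ksub, symmetric]) auto
    also have "\<dots> = 0" by (simp add: bindeq)
    finally show ?thesis
      by (subst (asm) nn_integral_0_iff_AE)
         (auto intro: measurable_compose[OF Ksub measurable_emeasure_subprob_algebra])
  qed
  define g where "g = (\<lambda>y::real. \<bar>y - 1/2\<bar> powr p)"
  have gm: "g \<in> borel_measurable borel" unfolding g_def by measurable
  have pw: "AE x in A. ennreal (g (regression K x)) \<le> (\<integral>\<^sup>+y. ennreal (g y) \<partial>K x)"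
    using AEK AE_space
  proof eventually_elim
    case (elim x)
    interpret K: prob_space "K x" using Kx(1)[OF elim(2)] .
    have sK: "sets (K x) = sets borel" using Kx(2)[OF elim(2)] by simp
    have mb: "f \<in> borel_measurable (K x)" if "f \<in> borel_measurable borel" for f :: "real \<Rightarrow> real"
      by (subst measurable_cong_sets[OF sK refl]) (rule that)
    have AE01: "AE y in K x. y \<in> {0..1}"
      by (rule AE_I'[of "-{0..1}"]) (use elim(1) sK in \<open>auto simp: null_sets_def\<close>)
    have int1: "integrable (K x) (\<lambda>y. y)"
      by (rule K.integrable_const_bound[where B=1]) (use AE01 in \<open>auto intro: mb\<close>)
    have intg: "integrable (K x) g"
    proof (rule K.integrable_const_bound[where B=1])
      show "AE y in K x. norm (g y) \<le> 1"
        using AE01 by eventually_elim (use p in \<open>auto simp: g_def intro!: powr_le1\<close>)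
    qed (rule mb[OF gm])
    have "g (K.expectation (\<lambda>y. y)) \<le> K.expectation (\<lambda>y. g y)"
      unfolding g_def by (rule K.jensens_inequality[OF int1 _ _ _ convex_abs_powr[OF p, of "1/2"]])
         (use intg in \<open>auto simp: g_def\<close>)
    then have "ennreal (g (regression K x)) \<le> ennreal (K.expectation g)"
      by (simp add: regression_def ennreal_leI)
    also have "\<dots> = (\<integral>\<^sup>+y. ennreal (g y) \<partial>K x)"
      by (rule nn_integral_eq_integral[OF intg, symmetric]) (auto simp: g_def)
    finally show ?case .
  qed
  have "(\<integral>\<^sup>+x. ennreal (g (regression K x)) \<partial>A) \<le> (\<integral>\<^sup>+x. \<integral>\<^sup>+y. ennreal (g y) \<partial>K x \<partial>A)"
    by (rule nn_integral_mono_AE[OF pw])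
  also have "\<dots> = (\<integral>\<^sup>+y. ennreal (g y) \<partial>(A \<bind> K))"
    by (rule nn_integral_bind[OF _ Ksub, symmetric]) (use gm in simp)
  also have "\<dots> = ennreal ((1/2) powr p / (p+1))"
    using unif_nn[of p] p by (simp add: bindeq g_def)
  finally have le: "(\<integral>x. g (regression K x) \<partial>A) \<le> (1/2) powr p / (p+1)"
    by (intro integral_real_bounded) (use p in auto)
  have nn: "0 \<le> (\<integral>x. g (regression K x) \<partial>A)"
    by (rule integral_nonneg_AE) (auto simp: g_def)
  have "normAp A p (\<lambda>x. regression K x - 1/2) = (\<integral>x. g (regression K x) \<partial>A) powr (1/p)"
    by (simp add: normAp_def g_def)
  also have "\<dots> \<le> ((1/2) powr p / (p+1)) powr (1/p)"
    by (rule powr_mono2[OF _ nn le]) (use p in simp)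
  also have "\<dots> = 1/2 * (p+1) powr (-1/p)" by (rule const_eq[OF p])
  finally show ?thesis .
qed
lemma exist:
  fixes p :: real
  assumes n: "0 < n" and A: "is_copula n A" and p: "1 \<le> p"
  shows "\<exists>C K. is_copula (Suc n) C \<and> marginal_copula (Suc n) C = A \<and> markov_kernel (Suc n) C K \<and>
            normAp A p (\<lambda>x. regression K x - 1 / 2) = 1 / 2 * (p + 1) powr (- 1 / p)"
proof -
  define e where "e = (\<lambda>(x::nat\<Rightarrow>real) i. if i = n then x 0 else x i)"
  define C where "C = distr A (cube_ms (Suc n)) e"
  define K where "K = (\<lambda>x::nat\<Rightarrow>real. return lborel (x 0))"
  have pA: "prob_space A" and sA: "sets A = sets (cube_ms n)"
    and uA: "\<And>i. i < n \<Longrightarrow> distr A lborel (\<lambda>z. z i) = uniform_measure lborel {0..1}"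
    using A by (auto simp: is_copula_def)
  have spA: "space A = PiE {..<n} (\<lambda>_. UNIV)"
    using sets_eq_imp_space_eq[OF sA] by (simp add: space_cube)
  have ci: "(\<lambda>x. x i) \<in> measurable A lborel" if "i < n" for i
    by (subst measurable_cong_sets[OF sA refl]) (rule coord_meas[OF that])
  have c0: "(\<lambda>x. x 0) \<in> measurable A lborel" using ci[OF n] .
  have em: "e \<in> measurable A (cube_ms (Suc n))"
    unfolding cube_ms_def e_def
  proof (rule measurable_PiM_single')
    fix i assume "i \<in> {..<Suc n}"
    then show "(\<lambda>x. if i = n then x 0 else x i) \<in> measurable A lborel"
      using c0 ci by (cases "i = n") auto
  next
    show "(\<lambda>x i. if i = n then x 0 else x i) \<in> space A \<rightarrow> (\<Pi>\<^sub>E i\<in>{..<Suc n}. space lborel)"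
      by (auto simp: spA PiE_iff extensional_def)
  qed
  have rx: "restrict (e x) {..<n} = x" if "x \<in> space A" for x
    using that by (auto simp: spA e_def PiE_iff extensional_def fun_eq_iff)
  have rm: "(\<lambda>z. restrict z {..<n}) \<in> measurable (cube_ms (Suc n)) (cube_ms n)"
    unfolding cube_ms_def by (rule measurable_restrict_subset) auto
  have sC: "sets C = sets (cube_ms (Suc n))" by (simp add: C_def)
  have spC: "space C = space (cube_ms (Suc n))" by (simp add: C_def)
  have marg: "marginal_copula (Suc n) C = A"
  proof -
    have "marginal_copula (Suc n) C = distr C (cube_ms n) (\<lambda>z. restrict z {..<n})"
      by (simp add: marginal_copula_def)
    also have "\<dots> = distr A (cube_ms n) ((\<lambda>z. restrict z {..<n}) \<circ> e)"
      unfolding C_def by (rule distr_distr[OF rm em])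
    also have "\<dots> = distr A (cube_ms n) (\<lambda>x. x)"
      by (rule distr_cong) (auto simp: rx)
    also have "\<dots> = A" by (rule distr_id2) (simp add: sA)
    finally show ?thesis .
  qed
  have cop: "is_copula (Suc n) C"
    unfolding is_copula_def
  proof (intro conjI allI impI)
    show "prob_space C" unfolding C_def by (rule prob_space.prob_space_distr[OF pA em])
    show "sets C = sets (cube_ms (Suc n))" by (rule sC)
    fix i assume i: "i < Suc n"
    have "distr C lborel (\<lambda>z. z i) = distr A lborel ((\<lambda>z. z i) \<circ> e)"
      unfolding C_def by (rule distr_distr[OF coord_meas[OF i] em])
    also have "\<dots> = uniform_measure lborel {0..1}"
    proof (cases "i = n")
      case True
      then have "(\<lambda>z. z i) \<circ> e = (\<lambda>x. x 0)" by (auto simp: e_def)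
      then show ?thesis using uA[OF n] by simp
    next
      case False
      then have "(\<lambda>z. z i) \<circ> e = (\<lambda>x. x i)" by (auto simp: e_def)
      then show ?thesis using uA[of i] i False by simp
    qed
    finally show "distr C lborel (\<lambda>z. z i) = uniform_measure lborel {0..1}" .
  qed
  have Km: "K \<in> measurable (cube_ms n) (prob_algebra lborel)"
  proof (rule measurable_prob_algebraI)
    show "prob_space (K x)" for x unfolding K_def by (rule prob_space_return) simp
    show "K \<in> measurable (cube_ms n) (subprob_algebra lborel)"
      unfolding K_def by (rule measurable_compose[OF coord_meas[OF n] return_measurable])
  qed
  have mk: "markov_kernel (Suc n) C K"
    unfolding markov_kernel_def
  proof (intro conjI ballI)
    show "K \<in> measurable (cube_ms (Suc n - 1)) (prob_algebra lborel)" using Km by simp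
    fix B :: "(nat \<Rightarrow> real) set" and F :: "real set" assume B: "B \<in> sets (cube_ms (Suc n - 1))" and F: "F \<in> sets lborel"
    have BA: "B \<in> sets A" using B sA by simp
    have cn: "(\<lambda>z. z n) \<in> measurable C lborel"
      by (subst measurable_cong_sets[OF sC refl]) (rule coord_meas, simp)
    have rmC: "(\<lambda>z. restrict z {..<n}) \<in> measurable C (cube_ms n)"
      by (subst measurable_cong_sets[OF sC refl]) (rule rm)
    define S where "S = {z\<in>space C. restrict z {..<Suc n - 1} \<in> B \<and> z (Suc n - 1) \<in> F}"
    have S_eq: "S = ((\<lambda>z. restrict z {..<n}) -` B \<inter> space C) \<inter> ((\<lambda>z. z n) -` F \<inter> space C)"
      by (auto simp: S_def)
    have S: "S \<in> sets (cube_ms (Suc n))"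
      unfolding S_eq sC[symmetric] using B F
      by (intro sets.Int measurable_sets[OF rmC] measurable_sets[OF cn]) auto
    have pre: "e -` S \<inter> space A = B \<inter> ((\<lambda>x. x 0) -` F \<inter> space A)"
    proof -
      have "e x \<in> space C" if "x \<in> space A" for x
        using measurable_space[OF em that] spC by simp
      moreover have "e x n = x 0" for x by (simp add: e_def)
      ultimately show ?thesis using sets.sets_into_space[OF BA]
        by (auto simp: S_def rx)
    qed
    have "emeasure C S = emeasure A (e -` S \<inter> space A)"
      unfolding C_def by (rule emeasure_distr[OF em S])
    also have "\<dots> = emeasure A (B \<inter> ((\<lambda>x. x 0) -` F \<inter> space A))" by (simp add: pre)
    also have "\<dots> = (\<integral>\<^sup>+x. indicator (B \<inter> ((\<lambda>x. x 0) -` F \<inter> space A)) x \<partial>A)"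
      by (rule nn_integral_indicator[symmetric])
         (use BA F in \<open>auto intro!: sets.Int measurable_sets[OF c0]\<close>)
    also have "\<dots> = (\<integral>\<^sup>+x\<in>B. emeasure (K x) F \<partial>marginal_copula (Suc n) C)"
      unfolding marg
      by (rule nn_integral_cong) (use F in \<open>auto simp: K_def indicator_def\<close>)
    finally show "emeasure C {z\<in>space C. restrict z {..<Suc n - 1} \<in> B \<and> z (Suc n - 1) \<in> F}
          = (\<integral>\<^sup>+x\<in>B. emeasure (K x) F \<partial>marginal_copula (Suc n) C)"
      by (simp add: S_def)
  qed
  have reg: "regression K x = x 0" for x
    unfolding regression_def K_def by (rule integral_return) auto
  have "(\<integral>x. \<bar>x 0 - 1/2\<bar> powr p \<partial>A) = (\<integral>y. \<bar>y - 1/2\<bar> powr p \<partial>distr A lborel (\<lambda>x. x 0))"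
    by (rule integral_distr[OF c0, symmetric]) measurable
  also have "\<dots> = (1/2) powr p / (p+1)"
    using uA[OF n] unif_int(2)[of p] p by simp
  finally have "normAp A p (\<lambda>x. regression K x - 1 / 2) = ((1/2) powr p / (p+1)) powr (1/p)"
    by (simp add: normAp_def reg)
  also have "\<dots> = 1 / 2 * (p + 1) powr (- 1 / p)" by (rule const_eq[OF p])
  finally show ?thesis using cop marg mk by blast
qed

theorem theorem5:
  fixes d :: nat and A :: "(nat \<Rightarrow> real) measure" and p :: real
  assumes "d \<ge> 2" and "is_copula (d - 1) A" and "1 \<le> p"
  shows "(\<forall>C K. is_copula d C \<and> marginal_copula d C = A \<and> markov_kernel d C K \<longrightarrow>
            normAp A p (\<lambda>x. regression K x - 1 / 2) \<le> 1 / 2 * (p + 1) powr (- 1 / p))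
       \<and> (\<exists>C K. is_copula d C \<and> marginal_copula d C = A \<and> markov_kernel d C K \<and>
            normAp A p (\<lambda>x. regression K x - 1 / 2) = 1 / 2 * (p + 1) powr (- 1 / p))"
proof -
  define n where "n = d - 1"
  have d: "d = Suc n" and n: "0 < n" using assms(1) by (simp_all add: n_def)
  have A: "is_copula n A" using assms(2) by (simp add: d)
  show ?thesis
    unfolding d
  proof (intro conjI allI impI)
    fix C K assume "is_copula (Suc n) C \<and> marginal_copula (Suc n) C = A \<and> markov_kernel (Suc n) C K"
    then show "normAp A p (\<lambda>x. regression K x - 1 / 2) \<le> 1 / 2 * (p + 1) powr (- 1 / p)"
      using upper[OF A assms(3)] by blast
  next
    show "\<exists>C K. is_copula (Suc n) C \<and> marginal_copula (Suc n) C = A \<and> markov_kernel (Suc n) C K \<and>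
            normAp A p (\<lambda>x. regression K x - 1 / 2) = 1 / 2 * (p + 1) powr (- 1 / p)"
      by (rule exist[OF n A assms(3)])
  qed
qed

end
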